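(* Let $X\in\mathbb{R}^n$ be a sub-Gaussian random vector with variance proxy $\sigma^2>0$. Then for any $\delta\in(0,1)$ and any $\varepsilon\in(0,1)$, $$\mathbb{P}\left(\|X\|\le \sigma\sqrt{\frac{\log\frac{1}{1-\varepsilon^2}}{\varepsilon^2}\,n+\frac{2}{\varepsilon^2}\log\frac{1}{\delta}}\right)\ge 1-\delta.$$
   Context: A random vector $X\in\mathbb{R}^n$ is sub-Gaussian with variance proxy $\sigma^2>0$ if $\mathbb{E}\left[e^{\lambda\langle \ell, X\rangle}\right]\le e^{\lambda^2\sigma^2/2}$ for all $\lambda\in\mathbb{R}$ and all $\ell\in\mathcal{S}^{n-1}=\{x\in\mathbb{R}^n:\|x\|=1\}$. $\|\cdot\|$ denotes the Euclidean norm. *)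

theory Defs
  imports "HOL-Probability.Probability"
begin

text \<open>The expectation of the nonnegative quantity is taken
as a nonnegative (extended) integral, so it is always defined.\<close>

definition sub_gaussian_vec :: "'a measure \<Rightarrow> ('a \<Rightarrow> real ^ 'n) \<Rightarrow> real \<Rightarrow> bool" where
  "sub_gaussian_vec M X \<sigma>2 \<longleftrightarrow>
     X \<in> borel_measurable M \<and>
     (\<forall>t::real. \<forall>l::real ^ 'n. norm l = 1 \<longrightarrow>
        (\<integral>\<^sup>+ \<omega>. ennreal (exp (t * (l \<bullet> X \<omega>))) \<partial>M) \<le> ennreal (exp (t\<^sup>2 * \<sigma>2 / 2)))"

end

theory Submission
  imports Defs
begin

lemma std_int1: "(\<integral>\<^sup>+x. ennreal (std_normal_density x) \<partial>lborel) = 1"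
  by (subst nn_integral_eq_integral) auto

lemma mgf1: "(\<integral>\<^sup>+x. ennreal (std_normal_density x * exp (a*x)) \<partial>lborel) = ennreal (exp (a\<^sup>2/2))"
proof -
  have eq: "std_normal_density x * exp (a*x) = exp (a\<^sup>2/2) * std_normal_density (x - a)" for x
  proof -
    have e: "- x\<^sup>2 / 2 + a*x = a\<^sup>2/2 + - (x-a)\<^sup>2 / 2"
      by (simp add: power2_eq_square field_simps)
    have "exp (- x\<^sup>2 / 2) * exp (a*x) = exp (a\<^sup>2/2) * exp (- (x-a)\<^sup>2 / 2)"
      by (simp only: exp_add[symmetric] e)
    then show ?thesis by (simp add: std_normal_density_def)
  qed
  have "(\<integral>\<^sup>+x. ennreal (std_normal_density x * exp (a*x)) \<partial>lborel)
      = (\<integral>\<^sup>+x. ennreal (exp (a\<^sup>2/2)) * ennreal (std_normal_density (x - a)) \<partial>lborel)"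
    by (simp add: eq ennreal_mult)
  also have "\<dots> = ennreal (exp (a\<^sup>2/2)) * (\<integral>\<^sup>+x. ennreal (std_normal_density (x - a)) \<partial>lborel)"
    by (rule nn_integral_cmult) simp
  also have "(\<integral>\<^sup>+x. ennreal (std_normal_density (x - a)) \<partial>lborel)
      = ennreal \<bar>1::real\<bar> * (\<integral>\<^sup>+x. ennreal (std_normal_density (a + 1 * x - a)) \<partial>lborel)"
    by (rule nn_integral_real_affine[where f="\<lambda>x. ennreal (std_normal_density (x - a))"]) auto
  also have "\<dots> = 1" using std_int1 by simp
  finally show ?thesis by simp
qed

lemma sq1: assumes "b < 1"
  shows "(\<integral>\<^sup>+x. ennreal (std_normal_density x * exp (b*x\<^sup>2/2)) \<partial>lborel) = ennreal (1 / sqrt (1-b))"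
proof -
  define c where "c = sqrt (1-b)"
  have c: "c > 0" using assms by (simp add: c_def)
  have c2: "c\<^sup>2 = 1 - b" using assms by (simp add: c_def)
  have eq: "std_normal_density x * exp (b*x\<^sup>2/2) = std_normal_density (0 + c * x)" for x
  proof -
    have "exp (- x\<^sup>2 / 2) * exp (b*x\<^sup>2/2) = exp (- (c*x)\<^sup>2 / 2)"
      by (simp add: exp_add[symmetric] power_mult_distrib c2 algebra_simps)
    then show ?thesis by (simp add: std_normal_density_def)
  qed
  have "1 = (\<integral>\<^sup>+x. ennreal (std_normal_density x) \<partial>lborel)" using std_int1 by simp
  also have "\<dots> = ennreal \<bar>c\<bar> * (\<integral>\<^sup>+x. ennreal (std_normal_density (0 + c * x)) \<partial>lborel)"
    by (rule nn_integral_real_affine) (use c in auto)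
  finally have h: "1 = ennreal c * (\<integral>\<^sup>+x. ennreal (std_normal_density x * exp (b*x\<^sup>2/2)) \<partial>lborel)"
    using c by (simp add: eq)
  define I where "I = (\<integral>\<^sup>+x. ennreal (std_normal_density x * exp (b*x\<^sup>2/2)) \<partial>lborel)"
  have i1: "ennreal (1/c) * ennreal c = 1" using c by (simp add: ennreal_mult[symmetric])
  have "I = (ennreal (1/c) * ennreal c) * I" by (simp add: i1)
  also have "\<dots> = ennreal (1/c) * (ennreal c * I)" by (simp only: mult.assoc)
  also have "\<dots> = ennreal (1/c)" by (simp only: h[folded I_def, symmetric] mult_1_right)
  finally show ?thesis by (simp add: c_def I_def)
qed

lemma norm_sq_vec: "(norm (x::real^'n))\<^sup>2 = (\<Sum>i\<in>UNIV. (x$i)\<^sup>2)"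
  by (simp add: norm_vec_def L2_set_def sum_nonneg)

lemma N_int:
  assumes [measurable]: "f \<in> borel_measurable borel"
  shows "(\<integral>\<^sup>+t. ennreal (f t) \<partial>density lborel std_normal_density)
       = (\<integral>\<^sup>+t. ennreal (std_normal_density t * f t) \<partial>lborel)"
  by (subst nn_integral_density) (auto simp: ennreal_mult')

lemma probN: "prob_space (density lborel std_normal_density)"
  by (rule prob_space_normal_density) simp

lemma PP: "product_prob_space (\<lambda>_::'n::finite. density lborel std_normal_density)"
  using probN
  by (simp add: product_prob_space_def product_prob_space_axioms_def product_sigma_finite_def
      prob_space_imp_sigma_finite)

lemma lemA:
  fixes x :: "real^'n" and s :: real
  shows "(\<integral>\<^sup>+g. ennreal (exp (s * (\<Sum>i\<in>UNIV. g i * x$i))) \<partial>PiM UNIV (\<lambda>_::'n. density lborel std_normal_density))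
       = ennreal (exp (s\<^sup>2 * (norm x)\<^sup>2 / 2))"
proof -
  interpret PP: product_prob_space "\<lambda>_::'n. density lborel std_normal_density" "UNIV::'n set"
    by (rule PP)
  have "(\<lambda>g. ennreal (exp (s * (\<Sum>i\<in>UNIV. g i * x$i)))) = (\<lambda>g. \<Prod>i\<in>UNIV. ennreal (exp (s * x$i * g i)))"
    by (simp add: prod_ennreal exp_sum sum_distrib_left mult_ac)
  note eq = this
  have "(\<integral>\<^sup>+g. ennreal (exp (s * (\<Sum>i\<in>UNIV. g i * x$i))) \<partial>PiM UNIV (\<lambda>_::'n. density lborel std_normal_density))
     = (\<Prod>i\<in>UNIV. \<integral>\<^sup>+t. ennreal (exp (s * x$i * t)) \<partial>density lborel std_normal_density)"
    unfolding eq by (rule PP.product_nn_integral_prod[where f="\<lambda>i t. ennreal (exp (s * x$i * t))"]) auto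
  also have "\<dots> = (\<Prod>i\<in>UNIV. ennreal (exp ((s * x$i)\<^sup>2/2)))"
    by (simp add: N_int mgf1)
  also have "\<dots> = ennreal (exp (\<Sum>i\<in>UNIV. (s * x$i)\<^sup>2/2))"
    by (simp add: prod_ennreal exp_sum)
  also have "(\<Sum>i\<in>UNIV. (s * x$i)\<^sup>2/2) = s\<^sup>2 * (norm x)\<^sup>2 / 2"
    by (simp add: norm_sq_vec power_mult_distrib sum_distrib_left sum_divide_distrib)
  finally show ?thesis .
qed

lemma lemC:
  fixes b :: real and g0 :: "'n::finite" assumes "b < 1"
  shows "(\<integral>\<^sup>+g. ennreal (exp (b * (\<Sum>i\<in>UNIV. (g i)\<^sup>2) / 2)) \<partial>PiM UNIV (\<lambda>_::'n. density lborel std_normal_density))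
       = ennreal ((1 / sqrt (1-b)) ^ CARD('n))"
proof -
  interpret PP: product_prob_space "\<lambda>_::'n. density lborel std_normal_density" "UNIV::'n set"
    by (rule PP)
  have "(\<lambda>g. ennreal (exp (b * (\<Sum>i\<in>UNIV. (g i)\<^sup>2) / 2))) = (\<lambda>g. \<Prod>i\<in>(UNIV::'n set). ennreal (exp (b * (g i)\<^sup>2 / 2)))"
    by (simp add: prod_ennreal exp_sum sum_distrib_left sum_divide_distrib)
  note eq = this
  have "(\<integral>\<^sup>+g. ennreal (exp (b * (\<Sum>i\<in>UNIV. (g i)\<^sup>2) / 2)) \<partial>PiM UNIV (\<lambda>_::'n. density lborel std_normal_density))
     = (\<Prod>i\<in>(UNIV::'n set). \<integral>\<^sup>+t. ennreal (exp (b * t\<^sup>2 / 2)) \<partial>density lborel std_normal_density)"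
    unfolding eq by (rule PP.product_nn_integral_prod[where f="\<lambda>i t. ennreal (exp (b * t\<^sup>2 / 2))"]) auto
  also have "\<dots> = (\<Prod>i\<in>(UNIV::'n set). ennreal (1 / sqrt (1-b)))"
    by (simp add: N_int sq1 assms)
  also have "\<dots> = ennreal ((1 / sqrt (1-b)) ^ CARD('n))"
    using assms by (simp add: ennreal_power)
  finally show ?thesis .
qed

lemma lemB:
  fixes M :: "'a measure" and X :: "'a \<Rightarrow> real ^ 'n" and \<sigma>2 s :: real and g :: "'n \<Rightarrow> real"
  assumes "prob_space M" and "sub_gaussian_vec M X \<sigma>2"
  shows "(\<integral>\<^sup>+\<omega>. ennreal (exp (s * (\<Sum>i\<in>UNIV. g i * X \<omega> $ i))) \<partial>M)
       \<le> ennreal (exp (s\<^sup>2 * \<sigma>2 * (\<Sum>i\<in>UNIV. (g i)\<^sup>2) / 2))"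
proof -
  interpret M: prob_space M by fact
  define v :: "real^'n" where "v = (\<chi> i. g i)"
  have inner: "(\<Sum>i\<in>UNIV. g i * X \<omega> $ i) = v \<bullet> X \<omega>" for \<omega>
    by (simp add: v_def inner_vec_def)
  have nv: "(\<Sum>i\<in>UNIV. (g i)\<^sup>2) = (norm v)\<^sup>2"
    by (simp add: v_def norm_sq_vec)
  show ?thesis
  proof (cases "v = 0")
    case True
    then have "(\<integral>\<^sup>+\<omega>. ennreal (exp (s * (\<Sum>i\<in>UNIV. g i * X \<omega> $ i))) \<partial>M) = (\<integral>\<^sup>+\<omega>. 1 \<partial>M)"
      by (simp add: inner)
    also have "\<dots> = 1" by (simp add: M.emeasure_space_1)
    finally show ?thesis using True nv by simp
  next
    case False
    define l where "l = v /\<^sub>R norm v"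
    define t where "t = s * norm v"
    have nl: "norm l = 1" using False by (simp add: l_def)
    have tl: "t * (l \<bullet> X \<omega>) = s * (v \<bullet> X \<omega>)" for \<omega>
      using False by (simp add: t_def l_def inner_scaleR_left)
    have h: "(\<integral>\<^sup>+\<omega>. ennreal (exp (t * (l \<bullet> X \<omega>))) \<partial>M) \<le> ennreal (exp (t\<^sup>2 * \<sigma>2 / 2))"
      using conjunct2[OF assms(2)[unfolded sub_gaussian_vec_def], rule_format, OF nl] .
    have eq: "(\<lambda>\<omega>. ennreal (exp (s * (\<Sum>i\<in>UNIV. g i * X \<omega> $ i)))) = (\<lambda>\<omega>. ennreal (exp (t * (l \<bullet> X \<omega>))))"
      by (simp only: inner tl)
    have rhs: "t\<^sup>2 * \<sigma>2 / 2 = s\<^sup>2 * \<sigma>2 * (\<Sum>i\<in>UNIV. (g i)\<^sup>2) / 2"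
      by (simp add: nv t_def power_mult_distrib)
    show ?thesis unfolding eq rhs[symmetric] by (rule h)
  qed
qed

theorem theorem2:
  fixes M :: "'a measure" and X :: "'a \<Rightarrow> real ^ 'n" and \<sigma> \<delta> \<epsilon> :: real
  assumes "prob_space M"
    and "\<sigma> > 0"
    and "sub_gaussian_vec M X (\<sigma>\<^sup>2)"
    and "0 < \<delta>" and "\<delta> < 1"
    and "0 < \<epsilon>" and "\<epsilon> < 1"
  shows "measure M {\<omega> \<in> space M. norm (X \<omega>) \<le>
           \<sigma> * sqrt (ln (1 / (1 - \<epsilon>\<^sup>2)) / \<epsilon>\<^sup>2 * real CARD('n)
                     + 2 / \<epsilon>\<^sup>2 * ln (1 / \<delta>))} \<ge> 1 - \<delta>"
proof -
  interpret M: prob_space M by fact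
  let ?G = "PiM UNIV (\<lambda>_::'n. density lborel std_normal_density)"
  interpret PP: product_prob_space "\<lambda>_::'n. density lborel std_normal_density" "UNIV::'n set"
    by (rule PP)
  have Gp: "prob_space ?G" by (rule prob_space_PiM) (rule probN)
  interpret MG: pair_sigma_finite M ?G
    by (simp add: pair_sigma_finite_def prob_space_imp_sigma_finite assms(1) Gp)
  have measX[measurable]: "X \<in> borel_measurable M"
    using assms(3) unfolding sub_gaussian_vec_def by blast
  have measXi[measurable]: "(\<lambda>\<omega>. X \<omega> $ i) \<in> borel_measurable M" for i
    by (rule measurable_compose[OF measX]) (auto intro!: borel_measurable_continuous_onI continuous_intros)
  define s where "s = \<epsilon> / \<sigma>"
  define L where "L = ln (1 / (1 - \<epsilon>\<^sup>2))"
  define n where "n = real CARD('n)"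
  define K where "K = (1 / sqrt (1 - \<epsilon>\<^sup>2)) ^ CARD('n)"
  define r where "r = \<sigma> * sqrt (L / \<epsilon>\<^sup>2 * n + 2 / \<epsilon>\<^sup>2 * ln (1 / \<delta>))"
  have e2: "\<epsilon>\<^sup>2 < 1" "0 < \<epsilon>\<^sup>2" using assms by (auto simp: power_less_one_iff)
  have ss: "s\<^sup>2 * \<sigma>\<^sup>2 = \<epsilon>\<^sup>2" using assms(2) by (simp add: s_def power_divide)
  have Lpos: "L > 0" using e2 by (simp add: L_def)
  have ldpos: "ln (1/\<delta>) > 0" using assms by simp
  have rpos: "r \<ge> 0" unfolding r_def using assms(2) Lpos ldpos e2 
    by (intro mult_nonneg_nonneg) (auto simp: n_def intro!: add_nonneg_nonneg)
  have F_meas: "(\<lambda>(\<omega>, g). ennreal (exp (s * (\<Sum>i\<in>UNIV. g i * X \<omega> $ i)))) \<in> borel_measurable (M \<Otimes>\<^sub>M ?G)"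
    by measurable
  have "(\<integral>\<^sup>+\<omega>. ennreal (exp (s\<^sup>2 * (norm (X \<omega>))\<^sup>2 / 2)) \<partial>M)
      = (\<integral>\<^sup>+\<omega>. (\<integral>\<^sup>+g. ennreal (exp (s * (\<Sum>i\<in>UNIV. g i * X \<omega> $ i))) \<partial>?G) \<partial>M)"
    by (simp add: lemA)
  also have "\<dots> = (\<integral>\<^sup>+g. (\<integral>\<^sup>+\<omega>. ennreal (exp (s * (\<Sum>i\<in>UNIV. g i * X \<omega> $ i))) \<partial>M) \<partial>?G)"
    using MG.Fubini'[OF F_meas] by simp
  also have "\<dots> \<le> (\<integral>\<^sup>+g. ennreal (exp (s\<^sup>2 * \<sigma>\<^sup>2 * (\<Sum>i\<in>UNIV. (g i)\<^sup>2) / 2)) \<partial>?G)"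
    by (rule nn_integral_mono) (rule lemB[OF assms(1) assms(3)])
  also have "\<dots> = ennreal K"
    unfolding ss K_def by (rule lemC) (use e2 in auto)
  finally have bound: "(\<integral>\<^sup>+\<omega>. ennreal (exp (s\<^sup>2 * (norm (X \<omega>))\<^sup>2 / 2)) \<partial>M) \<le> ennreal K" .
  define S where "S = {\<omega> \<in> space M. r < norm (X \<omega>)}"
  have S_sets: "S \<in> sets M" unfolding S_def by measurable
  define c where "c = exp (s\<^sup>2 * r\<^sup>2 / 2)"
  have "ennreal c * emeasure M S = (\<integral>\<^sup>+\<omega>. ennreal c * indicator S \<omega> \<partial>M)"
    by (rule nn_integral_cmult_indicator[symmetric]) (rule S_sets)
  also have "\<dots> \<le> (\<integral>\<^sup>+\<omega>. ennreal (exp (s\<^sup>2 * (norm (X \<omega>))\<^sup>2 / 2)) \<partial>M)"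
  proof (rule nn_integral_mono)
    fix \<omega> assume "\<omega> \<in> space M"
    show "ennreal c * indicator S \<omega> \<le> ennreal (exp (s\<^sup>2 * (norm (X \<omega>))\<^sup>2 / 2))"
    proof (cases "\<omega> \<in> S")
      case True
      then have "r < norm (X \<omega>)" by (simp add: S_def)
      then have "r\<^sup>2 \<le> (norm (X \<omega>))\<^sup>2" using rpos by (intro power_mono) auto
      then have "s\<^sup>2 * r\<^sup>2 / 2 \<le> s\<^sup>2 * (norm (X \<omega>))\<^sup>2 / 2" by (intro divide_right_mono mult_left_mono) auto
      then show ?thesis using True by (simp add: c_def)
    qed simp
  qed
  also have "\<dots> \<le> ennreal K" by (rule bound)
  finally have "ennreal (c * measure M S) \<le> ennreal K"
    by (simp add: M.emeasure_eq_measure ennreal_mult' c_def)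
  moreover have K0: "K \<ge> 0" using e2 by (simp add: K_def)
  ultimately have cm: "c * measure M S \<le> K"
    by (simp add: ennreal_le_iff)
  have arg: "L / \<epsilon>\<^sup>2 * n + 2 / \<epsilon>\<^sup>2 * ln (1 / \<delta>) \<ge> 0"
    using Lpos ldpos e2 by (auto simp: n_def intro!: add_nonneg_nonneg)
  have r2: "r\<^sup>2 = \<sigma>\<^sup>2 * (L / \<epsilon>\<^sup>2 * n + 2 / \<epsilon>\<^sup>2 * ln (1 / \<delta>))"
    unfolding r_def power_mult_distrib using arg by simp
  have s2: "s\<^sup>2 = \<epsilon>\<^sup>2 / \<sigma>\<^sup>2" by (simp add: s_def power_divide)
  have "s\<^sup>2 * r\<^sup>2 = \<epsilon>\<^sup>2 * (L / \<epsilon>\<^sup>2 * n + 2 / \<epsilon>\<^sup>2 * ln (1 / \<delta>))"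
    unfolding s2 r2 using assms(2) by simp
  also have "\<dots> = L * n + 2 * ln (1 / \<delta>)"
    using e2 by (simp add: distrib_left)
  finally have sr: "s\<^sup>2 * r\<^sup>2 / 2 = L * n / 2 + ln (1/\<delta>)" by simp
  have eL: "exp (L/2) = 1 / sqrt (1 - \<epsilon>\<^sup>2)"
  proof -
    have "(exp (L/2))\<^sup>2 = exp L" by (simp add: power2_eq_square exp_add[symmetric])
    also have "exp L = 1 / (1 - \<epsilon>\<^sup>2)" using e2 by (simp add: L_def)
    finally have "sqrt (1 / (1 - \<epsilon>\<^sup>2)) = exp (L/2)"
      by (intro real_sqrt_unique) auto
    then show ?thesis by (simp add: real_sqrt_divide)
  qed
  have "K = exp (L/2) ^ CARD('n)" by (simp only: K_def eL)
  also have "\<dots> = exp (real CARD('n) * (L/2))" by (rule exp_of_nat_mult[symmetric])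
  also have "\<dots> = exp (L * n / 2)" by (simp add: n_def mult_ac)
  finally have Kc: "K = exp (L * n / 2)" .
  have Kpos: "K > 0" by (simp add: Kc)
  have "c = exp (L * n / 2) * exp (ln (1/\<delta>))" by (simp only: c_def sr exp_add)
  also have "exp (ln (1/\<delta>)) = 1/\<delta>" using assms(4) by simp
  finally have c_eq: "c = K / \<delta>" by (simp add: Kc)
  have "K * (measure M S / \<delta>) \<le> K * 1" using cm c_eq by simp
  then have "measure M S / \<delta> \<le> 1" using Kpos by (simp only: mult_le_cancel_left_pos)
  then have mS: "measure M S \<le> \<delta>" using assms(4) by (simp add: divide_le_eq_1_pos)
  have "{\<omega> \<in> space M. norm (X \<omega>) \<le> r} = space M - S" by (auto simp: S_def)
  then have "measure M {\<omega> \<in> space M. norm (X \<omega>) \<le> r} = 1 - measure M S"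
    using M.prob_compl[OF S_sets] by simp
  then show ?thesis using mS unfolding r_def L_def n_def by linarith
qed

end
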